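(* Let $E\subseteq\mathbb{R}$ and let $f:E\to\mathbb{R}$ be Abel continuous on $E$. Then $f$ is continuous on $E$ in the ordinary sense.
   Context: A sequence $(p_n)_{n\ge 0}$ of real numbers is Abel convergent to $\ell\in\mathbb{R}$ if the series $\sum_{k=0}^{\infty}p_k x^k$ converges for every $0\le x<1$ and $\lim_{x\to 1^-}(1-x)\sum_{k=0}^{\infty}p_k x^k=\ell$. A function $f:E\to\mathbb{R}$ is Abel continuous on $E$ if for every sequence $(p_n)$ of points of $E$ that is Abel convergent to a point $\ell\in E$, the sequence $(f(p_n))$ is Abel convergent to $f(\ell)$. *)

theory Defs
  imports "HOL-Analysis.Analysis"
begin

definition abel_convergent :: "(nat \<Rightarrow> real) \<Rightarrow> real \<Rightarrow> bool" where
  "abel_convergent p l \<longleftrightarrow>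
     (\<forall>x::real. 0 \<le> x \<and> x < 1 \<longrightarrow> summable (\<lambda>k. p k * x ^ k)) \<and>
     ((\<lambda>x. (1 - x) * (\<Sum>k. p k * x ^ k)) \<longlongrightarrow> l) (at_left 1)"

definition abel_continuous_on :: "real set \<Rightarrow> (real \<Rightarrow> real) \<Rightarrow> bool" where
  "abel_continuous_on E f \<longleftrightarrow>
     (\<forall>p l. (\<forall>n. p n \<in> E) \<longrightarrow> l \<in> E \<longrightarrow> abel_convergent p l \<longrightarrow>
        abel_convergent (\<lambda>n. f (p n)) (f l))"

end

theory Submission
  imports Defs
begin

lemma abel_of_tendsto:
  fixes p :: "nat \<Rightarrow> real"
  assumes lim: "p \<longlonglongrightarrow> l"
  shows "abel_convergent p l"
proof -
  define q where "q n = p n - l" for n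
  have qeq: "q = (\<lambda>n. p n - l)" by (simp add: fun_eq_iff q_def)
  have q0: "q \<longlonglongrightarrow> 0" using tendsto_diff[OF lim tendsto_const[of l]] by (simp add: qeq)
  obtain B where B: "\<And>n. \<bar>q n\<bar> \<le> B" "B \<ge> 0"
  proof -
    have "Bseq q" using q0 by (rule convergent_imp_Bseq[OF convergentI])
    then obtain K where "K > 0" "\<And>n. norm (q n) \<le> K" by (auto simp: Bseq_def)
    thus ?thesis using that[of K] by auto
  qed
  have sq: "summable (\<lambda>k. q k * x ^ k)" if "0 \<le> x" "x < 1" for x :: real
  proof (rule summable_comparison_test[where g = "\<lambda>k. B * x ^ k"])
    show "\<exists>N. \<forall>n\<ge>N. norm (q n * x ^ n) \<le> B * x ^ n"
      using B that by (auto simp: abs_mult intro!: mult_right_mono)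
    show "summable (\<lambda>k. B * x ^ k)" using that by (intro summable_mult summable_geometric) auto
  qed
  have sg: "summable (\<lambda>k. l * x ^ k)" if "0 \<le> x" "x < 1" for x :: real
    using that by (intro summable_mult summable_geometric) auto
  have sp: "summable (\<lambda>k. p k * x ^ k)" if "0 \<le> x" "x < 1" for x :: real
  proof -
    have "summable (\<lambda>k. q k * x ^ k + l * x ^ k)" using sq[OF that] sg[OF that] by (rule summable_add)
    thus ?thesis by (simp add: q_def algebra_simps)
  qed
  have eq: "(1 - x) * (\<Sum>k. p k * x ^ k) = l + (1 - x) * (\<Sum>k. q k * x ^ k)"
    if "0 \<le> x" "x < 1" for x :: real
  proof -
    have "(\<Sum>k. p k * x ^ k) = (\<Sum>k. q k * x ^ k + l * x ^ k)" by (simp add: q_def algebra_simps)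
    also have "\<dots> = (\<Sum>k. q k * x ^ k) + (\<Sum>k. l * x ^ k)"
      using sq[OF that] sg[OF that] by (rule suminf_add[symmetric])
    also have "(\<Sum>k. l * x ^ k) = l / (1 - x)"
      using that by (simp add: suminf_mult suminf_geometric summable_geometric)
    finally show ?thesis using that by (simp add: field_simps)
  qed
  have main: "((\<lambda>x. (1 - x) * (\<Sum>k. q k * x ^ k)) \<longlongrightarrow> 0) (at_left 1)"
  proof (rule tendstoI)
    fix e :: real assume e: "e > 0"
    obtain N where N: "\<And>n. n \<ge> N \<Longrightarrow> \<bar>q n\<bar> < e / 2"
      using q0 e unfolding lim_sequentially by (metis dist_real_def diff_zero half_gt_zero)
    define d where "d = e / (2 * (real N * B + 1))"
    have NB: "real N * B \<ge> 0" using B by simp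
    have d: "d > 0" unfolding d_def using e NB by (intro divide_pos_pos) auto
    have "eventually (\<lambda>x. x \<in> {max 0 (1 - d)<..<1}) (at_left (1::real))"
      by (rule eventually_at_left_real) (use d in auto)
    thus "eventually (\<lambda>x. dist ((1 - x) * (\<Sum>k. q k * x ^ k)) 0 < e) (at_left 1)"
    proof eventually_elim
      case (elim x)
      hence x: "0 \<le> x" "x < 1" "1 - x < d" by auto
      define g where "g k = (if k < N then B else 0) + e / 2 * x ^ k" for k
      have sg1: "summable (\<lambda>k. if k < N then B else 0)"
        by (rule summable_finite[of "{..<N}"]) auto
      have sg2: "summable (\<lambda>k. e / 2 * x ^ k)" using x by (intro summable_mult summable_geometric) auto
      have sgg: "summable g" unfolding g_def using sg1 sg2 by (rule summable_add)
      have bnd: "\<bar>q k * x ^ k\<bar> \<le> g k" for k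
      proof (cases "k < N")
        case True
        have "\<bar>q k * x ^ k\<bar> \<le> B * 1" unfolding abs_mult
          using B x by (intro mult_mono) (auto simp: power_le_one)
        moreover have "0 \<le> e / 2 * x ^ k" using e x by auto
        ultimately show ?thesis using True by (simp add: g_def)
      next
        case False
        have "\<bar>q k\<bar> \<le> e / 2" using N[of k] False by auto
        hence "\<bar>q k\<bar> * x ^ k \<le> e / 2 * x ^ k" using x by (intro mult_right_mono) auto
        hence "\<bar>q k * x ^ k\<bar> \<le> e / 2 * x ^ k" using x by (simp add: abs_mult)
        thus ?thesis using False by (simp add: g_def)
      qed
      have sabs: "summable (\<lambda>k. \<bar>q k * x ^ k\<bar>)"
        by (rule summable_comparison_test'[OF sgg, of 0]) (use bnd in auto)
      have "\<bar>\<Sum>k. q k * x ^ k\<bar> \<le> (\<Sum>k. \<bar>q k * x ^ k\<bar>)"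
        by (rule summable_rabs[OF sabs])
      also have "\<dots> \<le> suminf g"
        by (rule suminf_le[OF bnd sabs sgg])
      also have "suminf g = (\<Sum>k. if k < N then B else 0) + (\<Sum>k. e / 2 * x ^ k)"
        unfolding g_def using sg1 sg2 by (rule suminf_add[symmetric])
      also have "(\<Sum>k. if k < N then B else 0) = (\<Sum>k<N. if k < N then B else 0)"
        by (rule suminf_finite) auto
      also have "\<dots> = (\<Sum>k<N. B)" by simp
      also have "(\<Sum>k. e / 2 * x ^ k) = e / 2 / (1 - x)"
      proof -
        have nx: "norm x < 1" using x by simp
        show ?thesis using suminf_mult[OF summable_geometric[OF nx], of "e/2"] suminf_geometric[OF nx]
          by simp
      qed
      finally have S: "\<bar>\<Sum>k. q k * x ^ k\<bar> \<le> real N * B + e / 2 / (1 - x)" by simp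
      have "\<bar>(1 - x) * (\<Sum>k. q k * x ^ k)\<bar> \<le> (1 - x) * (real N * B + e / 2 / (1 - x))"
        unfolding abs_mult using S x by (intro mult_mono) auto
      also have "\<dots> = (1 - x) * (real N * B) + e / 2" using x by (simp add: field_simps)
      also have "(1 - x) * (real N * B) < d * (real N * B + 1)"
      proof -
        have "(1 - x) * (real N * B) \<le> d * (real N * B)" using x NB by (intro mult_right_mono) auto
        thus ?thesis using d by (simp add: distrib_left)
      qed
      also have "d * (real N * B + 1) = e / 2" unfolding d_def using NB
        by (simp add: field_simps)
      finally show ?case using e by simp
    qed
  qed
  have "((\<lambda>x. l + (1 - x) * (\<Sum>k. q k * x ^ k)) \<longlongrightarrow> l + 0) (at_left 1)"
    by (intro tendsto_add tendsto_const main)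
  moreover have "eventually (\<lambda>x. x \<in> {0<..<1}) (at_left (1::real))"
    by (rule eventually_at_left_real) auto
  hence "eventually (\<lambda>x. l + (1 - x) * (\<Sum>k. q k * x ^ k) = (1 - x) * (\<Sum>k. p k * x ^ k)) (at_left 1)"
    by eventually_elim (simp add: eq)
  ultimately have "((\<lambda>x. (1 - x) * (\<Sum>k. p k * x ^ k)) \<longlongrightarrow> l) (at_left 1)"
    by (simp add: Lim_transform_eventually)
  thus ?thesis unfolding abel_convergent_def using sp by blast
qed

lemma not_abel_above:
  fixes q :: "nat \<Rightarrow> real"
  assumes e: "e > 0" and q: "\<And>n. q n \<ge> c + e"
  shows "\<not> abel_convergent q c"
proof
  assume a: "abel_convergent q c"
  have "eventually (\<lambda>x. x \<in> {0<..<1}) (at_left (1::real))"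
    by (rule eventually_at_left_real) auto
  hence ev: "eventually (\<lambda>x. c + e \<le> (1 - x) * (\<Sum>k. q k * x ^ k)) (at_left 1)"
  proof eventually_elim
    case (elim x)
    hence x: "0 < x" "x < 1" by auto
    have s: "summable (\<lambda>k. q k * x ^ k)" using a x unfolding abel_convergent_def by auto
    have "(\<Sum>k. (c + e) * x ^ k) \<le> (\<Sum>k. q k * x ^ k)"
      by (rule suminf_le) (use q x s in \<open>auto intro!: mult_right_mono summable_mult summable_geometric\<close>)
    moreover have "(\<Sum>k. (c + e) * x ^ k) = (c + e) / (1 - x)"
      using x by (simp add: suminf_mult suminf_geometric summable_geometric)
    ultimately have "(c + e) / (1 - x) \<le> (\<Sum>k. q k * x ^ k)" by simp
    hence "(1 - x) * ((c + e) / (1 - x)) \<le> (1 - x) * (\<Sum>k. q k * x ^ k)"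
      using x by (intro mult_left_mono) auto
    thus ?case using x by simp
  qed
  have lim: "((\<lambda>x. (1 - x) * (\<Sum>k. q k * x ^ k)) \<longlongrightarrow> c) (at_left 1)"
    using a unfolding abel_convergent_def by auto
  have "c + e \<le> c"
    by (rule tendsto_lowerbound[OF lim ev]) (simp add: trivial_limit_at_left_real)
  thus False using e by simp
qed

lemma abel_minus:
  assumes "abel_convergent q c"
  shows "abel_convergent (\<lambda>n. - q n) (- c)"
proof -
  have s: "\<And>x. 0 \<le> x \<and> x < 1 \<Longrightarrow> summable (\<lambda>k. q k * x ^ k)" and
    l: "((\<lambda>x. (1 - x) * (\<Sum>k. q k * x ^ k)) \<longlongrightarrow> c) (at_left 1)"
    using assms unfolding abel_convergent_def by auto
  have "summable (\<lambda>k. - q k * x ^ k)" if "0 \<le> x \<and> x < 1" for x :: real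
    using summable_minus[OF s[OF that]] by simp
  moreover have "((\<lambda>x. (1 - x) * (\<Sum>k. - q k * x ^ k)) \<longlongrightarrow> - c) (at_left 1)"
  proof -
    have "((\<lambda>x. - ((1 - x) * (\<Sum>k. q k * x ^ k))) \<longlongrightarrow> - c) (at_left 1)"
      by (rule tendsto_minus[OF l])
    moreover have "eventually (\<lambda>x. x \<in> {0<..<1}) (at_left (1::real))"
      by (rule eventually_at_left_real) auto
    hence "eventually (\<lambda>x. - ((1 - x) * (\<Sum>k. q k * x ^ k)) = (1 - x) * (\<Sum>k. - q k * x ^ k)) (at_left 1)"
    proof eventually_elim
      case (elim x)
      hence "(\<Sum>k. - q k * x ^ k) = - (\<Sum>k. q k * x ^ k)"
        using suminf_minus[OF s, of x] by simp
      thus ?case by simp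
    qed
    ultimately show ?thesis by (rule Lim_transform_eventually)
  qed
  ultimately show ?thesis unfolding abel_convergent_def by blast
qed

theorem theorem1:
  fixes E :: "real set" and f :: "real \<Rightarrow> real"
  assumes "abel_continuous_on E f"
  shows "continuous_on E f"
proof (rule continuous_on_sequentiallyI)
  fix u a assume uE: "\<forall>n. u n \<in> E" and aE: "a \<in> E" and ua: "u \<longlonglongrightarrow> a"
  have key: "abel_convergent (\<lambda>n. f (u (r n))) (f a)" if "strict_mono r" for r
  proof -
    have "(u \<circ> r) \<longlonglongrightarrow> a" by (rule LIMSEQ_subseq_LIMSEQ[OF ua that])
    hence ac: "abel_convergent (u \<circ> r) a" by (rule abel_of_tendsto)
    have "\<forall>n. (u \<circ> r) n \<in> E" using uE by simp
    hence "abel_convergent (\<lambda>n. f ((u \<circ> r) n)) (f a)"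
      using assms aE ac unfolding abel_continuous_on_def by blast
    thus ?thesis by simp
  qed
  show "(\<lambda>n. f (u n)) \<longlonglongrightarrow> f a"
  proof (rule ccontr)
    assume nt: "\<not> (\<lambda>n. f (u n)) \<longlonglongrightarrow> f a"
    obtain e :: real where e: "e > 0" and ne: "\<not> eventually (\<lambda>n. dist (f (u n)) (f a) < e) sequentially"
      using nt unfolding tendsto_iff by blast
    have fr: "frequently (\<lambda>n. \<not> dist (f (u n)) (f a) < e) sequentially"
      using ne by (simp only: not_eventually)
    have "frequently (\<lambda>n. f (u n) \<ge> f a + e \<or> f (u n) \<le> f a - e) sequentially"
      using fr by (rule frequently_elim1) (auto simp: dist_real_def abs_if split: if_splits)
    hence "frequently (\<lambda>n. f (u n) \<ge> f a + e) sequentially \<or> frequently (\<lambda>n. f (u n) \<le> f a - e) sequentially"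
      by (simp only: frequently_disj_iff)
    thus False
    proof
      assume "frequently (\<lambda>n. f (u n) \<ge> f a + e) sequentially"
      hence "infinite {n. f (u n) \<ge> f a + e}"
        by (simp only: frequently_cofinite[symmetric] cofinite_eq_sequentially)
      then obtain r :: "nat \<Rightarrow> nat" where r: "strict_mono r" "\<And>n. r n \<in> {n. f (u n) \<ge> f a + e}"
        using infinite_enumerate by blast
      have "\<And>n. f (u (r n)) \<ge> f a + e" using r(2) by blast
      hence "\<not> abel_convergent (\<lambda>n. f (u (r n))) (f a)" by (rule not_abel_above[OF e])
      thus False using key[OF r(1)] by blast
    next
      assume "frequently (\<lambda>n. f (u n) \<le> f a - e) sequentially"
      hence "infinite {n. f (u n) \<le> f a - e}"
        by (simp only: frequently_cofinite[symmetric] cofinite_eq_sequentially)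
      then obtain r :: "nat \<Rightarrow> nat" where r: "strict_mono r" "\<And>n. r n \<in> {n. f (u n) \<le> f a - e}"
        using infinite_enumerate by blast
      have "- f (u (r n)) \<ge> - f a + e" for n using r(2)[of n] by simp
      hence "\<not> abel_convergent (\<lambda>n. - f (u (r n))) (- f a)" by (rule not_abel_above[OF e])
      thus False using abel_minus[OF key[OF r(1)]] by blast
    qed
  qed
qed

end
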